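(* Let $\Sigma=((x_1,x_2),(x_3,x_4),B)$ where $B$ has rows indexed by $x_1,x_2,x_3,x_4$ and columns by $x_1,x_2$ given by $\begin{pmatrix}0&1\\-1&0\\0&-1\\0&0\end{pmatrix}$. Then $\mathcal A(\Sigma)=\mathbb Z[x_1,x_2,x_3,x_4,\frac{1+x_2}{x_1},\frac{x_1+x_3}{x_2},\frac{x_1+x_3+x_2x_3}{x_1x_2}]$, and for every $y\in\mathcal A(\Sigma)$ there is a ring homomorphism $f:\mathcal A(\Sigma)\to\mathcal A(\Sigma)$ with $x_1\mapsto0$, $x_2\mapsto-1$, $x_3\mapsto 0$, $x_4\mapsto x_1$, $\frac{1+x_2}{x_1}\mapsto y$, $\frac{x_1+x_3}{x_2}\mapsto0$, $\frac{x_1+x_3+x_2x_3}{x_1x_2}\mapsto -1$, which is a rooted cluster morphism $\mathcal A(\Sigma)\to\mathcal A(\Sigma)$. In particular rooted cluster morphisms are not determined by the images of the initial cluster variables. Moreover for $y=x_2$ one has $f(\mathcal A(\Sigma))=\mathbb Z[x_1,x_2]$ while $\mathcal A(f(\Sigma))=\mathbb Z[x_1]$, so $f$ is a rooted cluster morphism which is not ideal.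
   Context: A seed is a triple $\Sigma=(\mathbf{ex},\mathbf{fx},B)$ where $\mathbf{ex},\mathbf{fx}$ are disjoint finite or countable sets of indeterminates (exchangeable resp. frozen variables), $\mathbf{x}=\mathbf{ex}\sqcup\mathbf{fx}$, and $B=(b_{yz})_{y\in\mathbf x,z\in\mathbf{ex}}$ is a locally finite integer matrix with skew-symmetrizable square part on $\mathbf{ex}\times\mathbf{ex}$. Mutation $\mu_x$ ($x\in\mathbf{ex}$) is Fomin–Zelevinsky mutation: $x$ is replaced by $x'$ with $xx'=\prod_{b_{yx}>0}y^{b_{yx}}+\prod_{b_{yx}<0}y^{-b_{yx}}$, frozen variables are kept, and $B$ undergoes matrix mutation. $\Sigma$-admissible sequences are sequences of successive mutations at exchangeable variables. The rooted cluster algebra $\mathcal A(\Sigma)$ is $\Sigma$ together with the $\mathbb Z$-subalgebra of $\mathbb Q(\mathbf x)$ generated by all cluster variables of all seeds obtained from $\Sigma$ by admissible mutation sequences. A rooted cluster morphism $f:\mathcal A(\Sigma)\to\mathcal A(\Sigma')$ is a ring homomorphism with (CM1) $f(\mathbf{ex})\subseteq\mathbf{ex}'\sqcup\mathbb Z$; (CM2) $f(\mathbf{fx})\subseteq\mathbf x'\sqcup\mathbb Z$; (CM3) for every $\Sigma$-admissible $(x_1,\dots,x_l)$ with $(f(x_1),\dots,f(x_l))$ $\Sigma'$-admissible and every $y\in\mathbf x$, $f(\mu_{x_l}\circ\cdots\circ\mu_{x_1,\Sigma}(y))=\mu_{f(x_l)}\circ\cdots\circ\mu_{f(x_1),\Sigma'}(f(y))$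 (read as $f(y)$ if $f(y)\in\mathbb Z$), where $\mu_{x_l}\circ\cdots\circ\mu_{x_1,\Sigma}(y)$ is the variable in the position of $y$ after mutating. Image seed: $f(\Sigma)=(\mathbf{ex}'\cap f(\mathbf{ex}),(\mathbf x'\cap f(\mathbf x))\setminus(\mathbf{ex}'\cap f(\mathbf{ex})),B'[\mathbf x'\cap f(\mathbf x)])$ (submatrix of $B'$ with the corresponding rows and columns). $f$ is ideal if $\mathcal A(f(\Sigma))=f(\mathcal A(\Sigma))$. *)

theory Defs
  imports Main "HOL-Computational_Algebra.Polynomial" "HOL-Computational_Algebra.Fraction_Field"
begin

text \<open>A (labelled) seed over a field 'k: exchangeable labels, frozen labels,
  the cluster variables at each label, and the exchange matrix (b i j = b_{x_i x_j}).\<close>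
record 'k seed =
  sex  :: "nat set"
  sfx  :: "nat set"
  svar :: "nat \<Rightarrow> 'k"
  smat :: "nat \<Rightarrow> nat \<Rightarrow> int"

definition slab :: "'k seed \<Rightarrow> nat set" where
  "slab S = sex S \<union> sfx S"

definition mut :: "nat \<Rightarrow> 'k::field seed \<Rightarrow> 'k seed" where
  "mut k S = S\<lparr>
     svar := (svar S)(k :=
        ((\<Prod>i\<in>{i\<in>slab S. smat S i k > 0}. svar S i ^ nat (smat S i k))
       + (\<Prod>i\<in>{i\<in>slab S. smat S i k < 0}. svar S i ^ nat (- smat S i k))) / svar S k),
     smat := (\<lambda>i j. if i = k \<or> j = k then - smat S i j
                   else smat S i j + sgn (smat S i k) * max 0 (smat S i k * smat S k j)) \<rparr>"

fun mut_seq :: "'k::field seed \<Rightarrow> nat list \<Rightarrow> 'k seed" where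
  "mut_seq S [] = S"
| "mut_seq S (k # ks) = mut_seq (mut k S) ks"

definition vseq :: "'k::field seed \<Rightarrow> nat list \<Rightarrow> 'k list" where
  "vseq S ks = map (\<lambda>i. svar (mut_seq S (take i ks)) (ks ! i)) [0..<length ks]"

definition admissible :: "'k seed \<Rightarrow> nat list \<Rightarrow> bool" where
  "admissible S ks \<longleftrightarrow> set ks \<subseteq> sex S"

inductive_set zalg :: "'k::comm_ring_1 set \<Rightarrow> 'k set" for G where
  zalg_int: "of_int n \<in> zalg G"
| zalg_gen: "g \<in> G \<Longrightarrow> g \<in> zalg G"
| zalg_add: "a \<in> zalg G \<Longrightarrow> b \<in> zalg G \<Longrightarrow> a + b \<in> zalg G"
| zalg_mult: "a \<in> zalg G \<Longrightarrow> b \<in> zalg G \<Longrightarrow> a * b \<in> zalg G"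

definition cluster_vars :: "'k::field seed \<Rightarrow> 'k set" where
  "cluster_vars S = {svar (mut_seq S ks) j | ks j. admissible S ks \<and> j \<in> slab S}"

definition cluster_alg :: "'k::field seed \<Rightarrow> 'k set" where
  "cluster_alg S = zalg (cluster_vars S)"

definition ring_hom_on :: "'k::comm_ring_1 set \<Rightarrow> 'k set \<Rightarrow> ('k \<Rightarrow> 'k) \<Rightarrow> bool" where
  "ring_hom_on A A' f \<longleftrightarrow> f 1 = 1 \<and> f ` A \<subseteq> A' \<and>
     (\<forall>a\<in>A. \<forall>b\<in>A. f (a + b) = f a + f b \<and> f (a * b) = f a * f b)"

definition rooted_cluster_morphism :: "'k::field seed \<Rightarrow> 'k seed \<Rightarrow> ('k \<Rightarrow> 'k) \<Rightarrow> bool" where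
  "rooted_cluster_morphism S S' f \<longleftrightarrow>
     ring_hom_on (cluster_alg S) (cluster_alg S') f
   \<and> (\<forall>j\<in>sex S. f (svar S j) \<in> svar S' ` sex S' \<union> \<int>)
   \<and> (\<forall>j\<in>sfx S. f (svar S j) \<in> svar S' ` slab S' \<union> \<int>)
   \<and> (\<forall>ks ks'. admissible S ks \<and> admissible S' ks' \<and> map f (vseq S ks) = vseq S' ks' \<longrightarrow>
        (\<forall>j\<in>slab S.
            (f (svar S j) \<in> \<int> \<longrightarrow> f (svar (mut_seq S ks) j) = f (svar S j))
          \<and> (\<forall>j'\<in>slab S'. svar S' j' = f (svar S j) \<longrightarrow>
                f (svar (mut_seq S ks) j) = svar (mut_seq S' ks') j')))"

definition image_seed :: "('k \<Rightarrow> 'k) \<Rightarrow> 'k seed \<Rightarrow> 'k seed \<Rightarrow> 'k seed" where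
  "image_seed f S S' = S'\<lparr>
     sex := {j\<in>sex S'. svar S' j \<in> f ` svar S ` sex S},
     sfx := {j\<in>slab S'. svar S' j \<in> f ` svar S ` slab S} - {j\<in>sex S'. svar S' j \<in> f ` svar S ` sex S} \<rparr>"

definition ideal_morphism :: "('k::field \<Rightarrow> 'k) \<Rightarrow> 'k seed \<Rightarrow> 'k seed \<Rightarrow> bool" where
  "ideal_morphism f S S' \<longleftrightarrow> cluster_alg (image_seed f S S') = f ` cluster_alg S"

type_synonym rf = "int poly poly poly poly fract"

definition x1 :: rf where "x1 = Fract [:[:[:[:0, 1:]:]:]:] 1"
definition x2 :: rf where "x2 = Fract [:[:[:0, 1:]:]:] 1"
definition x3 :: rf where "x3 = Fract [:[:0, 1:]:] 1"
definition x4 :: rf where "x4 = Fract [:0, 1:] 1"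

definition Sigma :: "rf seed" where
  "Sigma = \<lparr> sex = {1, 2}, sfx = {3, 4},
     svar = (\<lambda>i. if i = 1 then x1 else if i = 2 then x2 else if i = 3 then x3
                 else if i = 4 then x4 else 0),
     smat = (\<lambda>i j. if i = 1 \<and> j = 2 then 1 else if i = 2 \<and> j = 1 then -1
                   else if i = 3 \<and> j = 2 then -1 else 0) \<rparr>"

end

theory Submission
  imports Defs
begin


definition mk :: "rf \<Rightarrow> rf \<Rightarrow> int \<Rightarrow> int \<Rightarrow> int \<Rightarrow> rf seed" where
  "mk v1 v2 e p q = \<lparr> sex = {1, 2}, sfx = {3, 4},
     svar = (\<lambda>i. if i = 1 then v1 else if i = 2 then v2 else if i = 3 then x3
                 else if i = 4 then x4 else 0),
     smat = (\<lambda>i j. if i = 1 \<and> j = 2 then e else if i = 2 \<and> j = 1 then -e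
                   else if i = 3 \<and> j = 1 then p else if i = 3 \<and> j = 2 then q else 0) \<rparr>"

lemma prod_filter4:
  "(\<Prod>i\<in>{i\<in>{1,2,3,4::nat}. P i}. g i) =
   (if P 1 then g 1 else 1) * (if P 2 then g 2 else 1) * (if P 3 then g 3 else 1) * (if P 4 then g 4 else 1)"
  by (subst prod.inter_filter) (simp_all add: mult_ac)

lemma slab_mk: "slab (mk v1 v2 e p q) = {1,2,3,4}"
  by (auto simp: slab_def mk_def)

lemma mk_simps: "sex (mk v1 v2 e p q) = {1,2}" "sfx (mk v1 v2 e p q) = {3,4}"
  "svar (mk v1 v2 e p q) = (\<lambda>i. if i = 1 then v1 else if i = 2 then v2 else if i = 3 then x3
                 else if i = 4 then x4 else 0)"
  "smat (mk v1 v2 e p q) = (\<lambda>i j. if i = 1 \<and> j = 2 then e else if i = 2 \<and> j = 1 then -e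
                   else if i = 3 \<and> j = 1 then p else if i = 3 \<and> j = 2 then q else 0)"
  by (simp_all add: mk_def)

lemma mut1: "mut 1 (mk v1 v2 e p q) = mk
   (((if -e > 0 then v2 ^ nat (-e) else 1) * (if p > 0 then x3 ^ nat p else 1)
    + (if -e < 0 then v2 ^ nat e else 1) * (if p < 0 then x3 ^ nat (-p) else 1)) / v1)
   v2 (-e) (-p) (q + sgn p * max 0 (p*e))"
proof -
  have m: "(\<lambda>i j. if i = 1 \<or> j = 1 then - smat (mk v1 v2 e p q) i j
                   else smat (mk v1 v2 e p q) i j + sgn (smat (mk v1 v2 e p q) i 1) * max 0 (smat (mk v1 v2 e p q) i 1 * smat (mk v1 v2 e p q) 1 j))
     = smat (mk v1 v2 (-e) (-p) (q + sgn p * max 0 (p*e)))"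
    unfolding mk_simps by (intro ext) (auto simp: sgn_if)
  show ?thesis
    unfolding mut_def slab_mk prod_filter4
    apply (rule seed.equality)
    apply (simp_all only: seed.simps m)
    apply (auto simp: mk_simps fun_eq_iff)
    done
qed

lemma mut2: "mut 2 (mk v1 v2 e p q) = mk v1
   (((if e > 0 then v1 ^ nat e else 1) * (if q > 0 then x3 ^ nat q else 1)
    + (if e < 0 then v1 ^ nat (-e) else 1) * (if q < 0 then x3 ^ nat (-q) else 1)) / v2)
   (-e) (p + sgn q * max 0 (q * (-e))) (-q)"
proof -
  have m: "(\<lambda>i j. if i = 2 \<or> j = 2 then - smat (mk v1 v2 e p q) i j
                   else smat (mk v1 v2 e p q) i j + sgn (smat (mk v1 v2 e p q) i 2) * max 0 (smat (mk v1 v2 e p q) i 2 * smat (mk v1 v2 e p q) 2 j))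
     = smat (mk v1 (0::rf) (-e) (p + sgn q * max 0 (q * (-e))) (-q))"
    unfolding mk_simps by (intro ext) (auto simp: sgn_if mult_le_0_iff)
  show ?thesis
    unfolding mut_def slab_mk prod_filter4
    apply (rule seed.equality)
    apply (simp_all only: seed.simps m)
    apply (auto simp: mk_simps fun_eq_iff)
    done
qed



lemma F_add: "Fract a 1 + Fract b 1 = Fract (a + b) (1::'a::idom)" by simp
lemma F_mult: "Fract a 1 * Fract b 1 = Fract (a * b) (1::'a::idom)" by simp
lemma F_eq: "Fract a 1 = Fract b (1::'a::idom) \<longleftrightarrow> a = b" by (simp add: eq_fract)
lemma F_zero: "(0::'a::idom fract) = Fract 0 1" by (simp add: Zero_fract_def)
lemma F_one: "(1::'a::idom fract) = Fract 1 1" by (simp add: One_fract_def)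
lemma F_uminus: "- Fract a 1 = Fract (-a) (1::'a::idom)" by simp

lemmas Fsimps = F_add F_mult F_eq F_uminus

lemma nz: "x1 \<noteq> 0" "x2 \<noteq> 0" "1 + x2 \<noteq> 0" "x1 + x3 \<noteq> 0" "x1 + x3 + x2 * x3 \<noteq> 0"
  by (simp_all add: x1_def x2_def x3_def F_zero F_one Fsimps del: eq_fract) (simp_all add: one_pCons)

lemma nz2: "x1 \<noteq> -1" "x2 \<noteq> -1" "x1 \<noteq> x2" "x3 \<noteq> x1" "x4 \<noteq> x1" "x3 \<noteq> 0" "x4 \<noteq> 0" "x3 \<noteq> -1" "x4 \<noteq> -1"
  by (simp_all add: x1_def x2_def x3_def x4_def F_zero F_one Fsimps del: eq_fract) (simp_all add: one_pCons)

definition za :: rf where "za = (1 + x2) / x1"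
definition zb :: rf where "zb = (x1 + x3) / x2"
definition zc :: rf where "zc = (x1 + x3 + x2 * x3) / (x1 * x2)"

lemma znz: "za \<noteq> 0" "zb \<noteq> 0" "zc \<noteq> 0"
  using nz unfolding za_def zb_def zc_def by auto

lemma ids: "(x2+1)/za = x1" "(1 + za*x3)/x2 = zc" "(za*x3 + 1)/zc = x2" "(1+zc)/za = zb"
  "(zc+1)/zb = za" "(x3 + zb)/zc = x1" "(zb + x3)/x1 = zc" "(x3+x1)/zb = x2"
  using nz znz
  apply (simp_all add: nonzero_divide_eq_eq)
  apply (simp_all add: za_def zb_def zc_def field_simps)
  done

lemma t1_0: "mut 1 (mk x1 x2 1 0 (-1)) = mk za x2 (-1) 0 (-1)"
  using nz znz by (subst mut1) (simp add: ids za_def[symmetric] zb_def[symmetric])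

lemma t1_1: "mut 1 (mk za x2 (-1) 0 (-1)) = mk x1 x2 1 0 (-1)"
  using nz znz by (subst mut1) (simp add: ids za_def[symmetric] zb_def[symmetric])

lemma t1_2: "mut 1 (mk za zc 1 0 1) = mk zb zc (-1) 0 1"
  using nz znz by (subst mut1) (simp add: ids za_def[symmetric] zb_def[symmetric])

lemma t1_3: "mut 1 (mk zb zc (-1) 0 1) = mk za zc 1 0 1"
  using nz znz by (subst mut1) (simp add: ids za_def[symmetric] zb_def[symmetric])

lemma t1_4: "mut 1 (mk zb x1 1 1 (-1)) = mk x2 x1 (-1) (-1) 0"
  using nz znz by (subst mut1) (simp add: ids za_def[symmetric] zb_def[symmetric])

lemma t1_5: "mut 1 (mk x2 x1 (-1) (-1) 0) = mk zb x1 1 1 (-1)"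
  using nz znz by (subst mut1) (simp add: ids za_def[symmetric] zb_def[symmetric])

lemma t1_6: "mut 1 (mk x2 za 1 (-1) 0) = mk zc za (-1) 1 0"
  using nz znz by (subst mut1) (simp add: ids za_def[symmetric] zb_def[symmetric])

lemma t1_7: "mut 1 (mk zc za (-1) 1 0) = mk x2 za 1 (-1) 0"
  using nz znz by (subst mut1) (simp add: ids za_def[symmetric] zb_def[symmetric])

lemma t1_8: "mut 1 (mk zc zb 1 1 0) = mk x1 zb (-1) (-1) 1"
  using nz znz by (subst mut1) (simp add: ids za_def[symmetric] zb_def[symmetric])

lemma t1_9: "mut 1 (mk x1 zb (-1) (-1) 1) = mk zc zb 1 1 0"
  using nz znz by (subst mut1) (simp add: ids za_def[symmetric] zb_def[symmetric])

lemma t2_1: "mut 2 (mk za x2 (-1) 0 (-1)) = mk za zc 1 0 1"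
  using nz znz by (subst mut2) (simp add: ids za_def[symmetric] zb_def[symmetric])

lemma t2_2: "mut 2 (mk za zc 1 0 1) = mk za x2 (-1) 0 (-1)"
  using nz znz by (subst mut2) (simp add: ids za_def[symmetric] zb_def[symmetric])

lemma t2_3: "mut 2 (mk zb zc (-1) 0 1) = mk zb x1 1 1 (-1)"
  using nz znz by (subst mut2) (simp add: ids za_def[symmetric] zb_def[symmetric])

lemma t2_4: "mut 2 (mk zb x1 1 1 (-1)) = mk zb zc (-1) 0 1"
  using nz znz by (subst mut2) (simp add: ids za_def[symmetric] zb_def[symmetric])

lemma t2_5: "mut 2 (mk x2 x1 (-1) (-1) 0) = mk x2 za 1 (-1) 0"
  using nz znz by (subst mut2) (simp add: ids za_def[symmetric] zb_def[symmetric])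

lemma t2_6: "mut 2 (mk x2 za 1 (-1) 0) = mk x2 x1 (-1) (-1) 0"
  using nz znz by (subst mut2) (simp add: ids za_def[symmetric] zb_def[symmetric])

lemma t2_7: "mut 2 (mk zc za (-1) 1 0) = mk zc zb 1 1 0"
  using nz znz by (subst mut2) (simp add: ids za_def[symmetric] zb_def[symmetric])

lemma t2_8: "mut 2 (mk zc zb 1 1 0) = mk zc za (-1) 1 0"
  using nz znz by (subst mut2) (simp add: ids za_def[symmetric] zb_def[symmetric])

lemma t2_9: "mut 2 (mk x1 zb (-1) (-1) 1) = mk x1 x2 1 0 (-1)"
  using nz znz by (subst mut2) (simp add: ids za_def[symmetric] zb_def[symmetric])

lemma t2_0: "mut 2 (mk x1 x2 1 0 (-1)) = mk x1 zb (-1) (-1) 1"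
  using nz znz by (subst mut2) (simp add: ids za_def[symmetric] zb_def[symmetric])

definition St :: "rf seed set" where
  "St = {mk x1 x2 1 0 (-1), mk za x2 (-1) 0 (-1), mk za zc 1 0 1, mk zb zc (-1) 0 1, mk zb x1 1 1 (-1), mk x2 x1 (-1) (-1) 0, mk x2 za 1 (-1) 0, mk zc za (-1) 1 0, mk zc zb 1 1 0, mk x1 zb (-1) (-1) 1}"


lemma St_sex: "S \<in> St \<Longrightarrow> sex S = {1,2}"
  unfolding St_def by (auto simp: mk_simps)

lemma St_mut: "S \<in> St \<Longrightarrow> k \<in> {1,2} \<Longrightarrow> mut k S \<in> St"
  unfolding St_def
  by (auto simp only: t1_0 t1_1 t1_2 t1_3 t1_4 t1_5 t1_6 t1_7 t1_8 t1_9
     t2_0 t2_1 t2_2 t2_3 t2_4 t2_5 t2_6 t2_7 t2_8 t2_9 insert_iff numeral_One) 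

lemma St_mut_seq: "S \<in> St \<Longrightarrow> set ks \<subseteq> {1,2} \<Longrightarrow> mut_seq S ks \<in> St"
  by (induction ks arbitrary: S) (auto simp: St_mut)

lemma Sigma_mk: "Sigma = mk x1 x2 1 0 (-1)"
  unfolding Sigma_def mk_def by (auto simp: fun_eq_iff)

lemma St_vars: "S \<in> St \<Longrightarrow> j \<in> {1,2,3,4} \<Longrightarrow> svar S j \<in> {x1, x2, x3, x4, za, zb, zc}"
  unfolding St_def by (auto simp: mk_simps)

lemma cv: "cluster_vars Sigma = {x1, x2, x3, x4, za, zb, zc}"
proof
  show "cluster_vars Sigma \<subseteq> {x1, x2, x3, x4, za, zb, zc}"
  proof
    fix v assume "v \<in> cluster_vars Sigma"
    then obtain ks j where v: "v = svar (mut_seq Sigma ks) j" "admissible Sigma ks" "j \<in> slab Sigma"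
      unfolding cluster_vars_def by blast
    have "Sigma \<in> St" unfolding Sigma_mk St_def by simp
    moreover have "set ks \<subseteq> {1,2}" using v(2) unfolding admissible_def Sigma_mk mk_simps .
    ultimately have "mut_seq Sigma ks \<in> St" by (rule St_mut_seq)
    moreover have "j \<in> {1,2,3,4}" using v(3) unfolding Sigma_mk slab_mk .
    ultimately show "v \<in> {x1, x2, x3, x4, za, zb, zc}" using v(1) St_vars by blast
  qed
next
  have e: "svar (mut_seq Sigma ks) j \<in> cluster_vars Sigma" if "set ks \<subseteq> {1,2}" "j \<in> {1,2,3,4}" for ks j
    using that unfolding cluster_vars_def admissible_def Sigma_mk mk_simps slab_mk by blast
  have "x1 = svar (mut_seq Sigma []) 1" "x2 = svar (mut_seq Sigma []) 2"
       "x3 = svar (mut_seq Sigma []) 3" "x4 = svar (mut_seq Sigma []) 4"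
       "za = svar (mut_seq Sigma [1]) 1" "zb = svar (mut_seq Sigma [2]) 2"
       "zc = svar (mut_seq Sigma [1,2]) 2"
    by (simp_all only: mut_seq.simps Sigma_mk t1_0 t2_1 t2_0) (simp_all add: mk_simps)
  then show "{x1, x2, x3, x4, za, zb, zc} \<subseteq> cluster_vars Sigma"
    using e by (metis empty_subsetI empty_set insert_subset list.simps(15) insertI1 insertCI)
qed



definition rhom :: "('a::comm_ring_1 \<Rightarrow> 'b::comm_ring_1) \<Rightarrow> bool" where
  "rhom f \<longleftrightarrow> f 0 = 0 \<and> f 1 = 1 \<and> (\<forall>a b. f (a + b) = f a + f b) \<and> (\<forall>a b. f (a * b) = f a * f b)"

lemma rhomD: assumes "rhom f" shows "f 0 = 0" "f 1 = 1" "f (a + b) = f a + f b" "f (a * b) = f a * f b"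
  using assms unfolding rhom_def by auto

lemma rhom_minus: "rhom f \<Longrightarrow> f (- a) = - f a"
  by (metis add_eq_0_iff add.right_inverse rhomD(1,3))

lemma rhom_diff: "rhom f \<Longrightarrow> f (a - b) = f a - f b"
  by (metis diff_conv_add_uminus rhomD(3) rhom_minus)

lemma map_poly_add_hom:
  assumes "f 0 = 0" "\<And>a b. f (a + b) = f a + f b"
  shows "map_poly f (p + q) = map_poly f p + map_poly f q"
  by (intro poly_eqI) (simp add: coeff_map_poly assms)

lemma map_poly_mult_hom:
  assumes "rhom f"
  shows "map_poly f (p * q) = map_poly f p * map_poly f q"
proof (induction p)
  case 0 then show ?case by simp
next
  case (pCons a p)
  have f0: "f 0 = 0" using rhomD[OF assms] by simp
  have "map_poly f (pCons a p * q) = map_poly f (smult a q + pCons 0 (p * q))" by simp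
  also have "\<dots> = smult (f a) (map_poly f q) + pCons 0 (map_poly f (p * q))"
    by (simp add: map_poly_add_hom[of f, OF f0] rhomD[OF assms] map_poly_smult map_poly_pCons f0)
  also have "\<dots> = map_poly f (pCons a p) * map_poly f q"
    by (simp add: pCons.IH map_poly_pCons f0)
  finally show ?case .
qed

lemma rhom_map_poly: "rhom f \<Longrightarrow> rhom (map_poly f)"
  unfolding rhom_def using map_poly_mult_hom map_poly_add_hom
  by (metis map_poly_0 map_poly_1' rhom_def)

lemma rhom_poly: "rhom f \<Longrightarrow> rhom (\<lambda>p. poly (map_poly f p) c)"
  using rhom_map_poly[of f] unfolding rhom_def by (simp add: map_poly_mult_hom map_poly_add_hom)

lemma rhom_pcompose: "rhom (\<lambda>p::'a::comm_ring_1 poly. pcompose p q)"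
  unfolding rhom_def by (simp add: pcompose_add pcompose_mult pcompose_1)

lemma rhom_of_int: "rhom (\<lambda>p::int poly. (of_int (poly p 0) :: 'b::comm_ring_1))"
  unfolding rhom_def by simp

lemma rhom_of_int': "rhom f \<Longrightarrow> f (of_int n) = of_int n"
proof -
  assume h: "rhom f"
  have n: "f (of_nat m) = of_nat m" for m
    by (induction m) (simp_all add: rhomD[OF h])
  show ?thesis
  proof (cases "n \<ge> 0")
    case True then have "n = int (nat n)" by simp
    then show ?thesis by (metis n of_int_of_nat_eq)
  next
    case False then have "n = - int (nat (-n))" by simp
    then show ?thesis by (metis n of_int_of_nat_eq of_int_minus rhom_minus[OF h])
  qed
qed



definition fmap :: "('a::idom \<Rightarrow> 'b::idom) \<Rightarrow> 'a fract \<Rightarrow> 'b fract" where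
  "fmap h r = (SOME s. \<exists>P Q. Q \<noteq> 0 \<and> r = Fract P Q \<and> s = Fract (h P) (h Q))"

lemma fmap_Fract:
  assumes h: "rhom h" and inj: "\<And>Q. Q \<noteq> 0 \<Longrightarrow> h Q \<noteq> 0" and Q: "Q \<noteq> 0"
  shows "fmap h (Fract P Q) = Fract (h P) (h Q)"
proof -
  have "\<exists>P' Q'. Q' \<noteq> 0 \<and> Fract P Q = Fract P' Q' \<and> s = Fract (h P') (h Q') \<Longrightarrow> s = Fract (h P) (h Q)" for s
  proof (elim exE conjE)
    fix P' Q' assume Q': "Q' \<noteq> 0" and eq: "Fract P Q = Fract P' Q'" and s: "s = Fract (h P') (h Q')"
    from eq Q Q' have "P * Q' = P' * Q" by (simp add: eq_fract)
    then have "h P * h Q' = h P' * h Q" by (metis rhomD(4)[OF h])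
    then show "s = Fract (h P) (h Q)" using s inj[OF Q] inj[OF Q'] by (simp add: eq_fract)
  qed
  moreover have "\<exists>P' Q'. Q' \<noteq> 0 \<and> Fract P Q = Fract P' Q' \<and> Fract (h P) (h Q) = Fract (h P') (h Q')"
    using Q by blast
  ultimately show ?thesis unfolding fmap_def by (rule some_equality[rotated]) 
qed

lemma rhom_fmap:
  assumes h: "rhom h" and inj: "\<And>Q. Q \<noteq> 0 \<Longrightarrow> h Q \<noteq> 0"
  shows "rhom (fmap h)"
proof -
  note F = fmap_Fract[OF h inj]
  have "fmap h 0 = 0" using F[of 1 0] by (simp add: Zero_fract_def rhomD[OF h] eq_fract)
  moreover have "fmap h 1 = 1" using F[of 1 1] by (simp add: One_fract_def rhomD[OF h])
  moreover have "fmap h (a + b) = fmap h a + fmap h b" for a b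
    by (cases a, cases b) (simp add: F rhomD[OF h] inj)
  moreover have "fmap h (a * b) = fmap h a * fmap h b" for a b
    by (cases a, cases b) (simp add: F rhomD[OF h] inj)
  ultimately show ?thesis unfolding rhom_def by blast
qed

definition loc :: "('a::idom \<Rightarrow> 'b::field) \<Rightarrow> 'a fract \<Rightarrow> 'b" where
  "loc h r = (SOME v. \<exists>P Q. h Q \<noteq> 0 \<and> r = Fract P Q \<and> v = h P / h Q)"

definition locD :: "('a::idom \<Rightarrow> 'b::field) \<Rightarrow> 'a fract set" where
  "locD h = {r. \<exists>P Q. h Q \<noteq> 0 \<and> r = Fract P Q}"

lemma loc_Fract:
  assumes h: "rhom h" and Q: "h Q \<noteq> 0"
  shows "loc h (Fract P Q) = h P / h Q"
proof -
  have Q0: "Q \<noteq> 0" using Q rhomD(1)[OF h] by auto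
  have "\<exists>P' Q'. h Q' \<noteq> 0 \<and> Fract P Q = Fract P' Q' \<and> s = h P' / h Q' \<Longrightarrow> s = h P / h Q" for s
  proof (elim exE conjE)
    fix P' Q' assume Q': "h Q' \<noteq> 0" and eq: "Fract P Q = Fract P' Q'" and s: "s = h P' / h Q'"
    have Q'0: "Q' \<noteq> 0" using Q' rhomD(1)[OF h] by auto
    from eq Q0 Q'0 have "P * Q' = P' * Q" by (simp add: eq_fract)
    then have "h P * h Q' = h P' * h Q" by (metis rhomD(4)[OF h])
    then show "s = h P / h Q" using s Q Q' by (simp add: frac_eq_eq mult.commute)
  qed
  moreover have "\<exists>P' Q'. h Q' \<noteq> 0 \<and> Fract P Q = Fract P' Q' \<and> h P / h Q = h P' / h Q'"
    using Q by blast
  ultimately show ?thesis unfolding loc_def by (rule some_equality[rotated]) 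
qed

lemma locD_add: assumes h: "rhom h" and a: "a \<in> locD h" and b: "b \<in> locD h"
  shows "a + b \<in> locD h \<and> loc h (a + b) = loc h a + loc h b"
proof -
  obtain P Q where PQ: "h Q \<noteq> 0" "a = Fract P Q" using a unfolding locD_def by blast
  obtain P' Q' where PQ': "h Q' \<noteq> 0" "b = Fract P' Q'" using b unfolding locD_def by blast
  have Q: "Q \<noteq> 0" "Q' \<noteq> 0" using PQ PQ' rhomD(1)[OF h] by auto
  have s: "a + b = Fract (P * Q' + P' * Q) (Q * Q')" using PQ PQ' Q by simp
  have hq: "h (Q * Q') \<noteq> 0" using PQ PQ' by (simp add: rhomD(4)[OF h])
  have "loc h (a + b) = h (P * Q' + P' * Q) / h (Q * Q')" using s hq loc_Fract[OF h] by simp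
  also have "\<dots> = h P / h Q + h P' / h Q'" using PQ(1) PQ'(1)
    by (simp add: rhomD[OF h] add_divide_distrib)
  finally show ?thesis using s hq loc_Fract[OF h] PQ PQ' unfolding locD_def by auto
qed

lemma locD_mult: assumes h: "rhom h" and a: "a \<in> locD h" and b: "b \<in> locD h"
  shows "a * b \<in> locD h \<and> loc h (a * b) = loc h a * loc h b"
proof -
  obtain P Q where PQ: "h Q \<noteq> 0" "a = Fract P Q" using a unfolding locD_def by blast
  obtain P' Q' where PQ': "h Q' \<noteq> 0" "b = Fract P' Q'" using b unfolding locD_def by blast
  have s: "a * b = Fract (P * P') (Q * Q')" using PQ PQ' by simp
  have hq: "h (Q * Q') \<noteq> 0" using PQ PQ' by (simp add: rhomD(4)[OF h])
  have "loc h (a * b) = h (P * P') / h (Q * Q')" using s hq loc_Fract[OF h] by simp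
  also have "\<dots> = h P / h Q * (h P' / h Q')"
    by (simp add: rhomD[OF h])
  finally show ?thesis using s hq loc_Fract[OF h] PQ PQ' unfolding locD_def by auto
qed



definition q0 :: "int poly poly" where "q0 = [:[:-1:], [:0,1:]:]"
definition sig2 :: "int poly poly \<Rightarrow> int poly poly" where "sig2 p = pcompose p q0"
definition sig :: "int poly poly poly poly \<Rightarrow> int poly poly poly poly" where
  "sig = map_poly (map_poly sig2)"

definition e1 :: "int poly \<Rightarrow> rf" where "e1 p = of_int (poly p 0)"
definition e2 :: "rf \<Rightarrow> int poly poly \<Rightarrow> rf" where "e2 y p = poly (map_poly e1 p) y"
definition e3 :: "rf \<Rightarrow> int poly poly poly \<Rightarrow> rf" where "e3 y p = poly (map_poly (e2 y) p) 0"
definition EE :: "rf \<Rightarrow> int poly poly poly poly \<Rightarrow> rf" where "EE y p = poly (map_poly (e3 y) p) x1"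

lemma rhom_sig2: "rhom sig2"
  unfolding sig2_def by (rule rhom_pcompose)
lemma rhom_sig: "rhom sig"
  unfolding sig_def by (intro rhom_map_poly rhom_sig2)
lemma rhom_e1: "rhom e1" unfolding e1_def by (rule rhom_of_int)
lemma rhom_e2: "rhom (e2 y)" unfolding e2_def[abs_def] by (intro rhom_poly rhom_e1)
lemma rhom_e3: "rhom (e3 y)" unfolding e3_def[abs_def] by (intro rhom_poly rhom_e2)
lemma rhom_EE: "rhom (EE y)" unfolding EE_def[abs_def] by (intro rhom_poly rhom_e3)

lemma deg_q0: "degree q0 > 0" by (simp add: q0_def)

lemma sig2_inj: "sig2 x = 0 \<longleftrightarrow> x = 0"
  unfolding sig2_def using pcompose_eq_0_iff[OF deg_q0] by blast

lemma sig_inj: "Q \<noteq> 0 \<Longrightarrow> sig Q \<noteq> 0"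
proof -
  have a: "map_poly sig2 x = 0 \<longleftrightarrow> x = 0" for x
    by (rule map_poly_eq_0_iff) (simp_all add: sig2_inj rhomD[OF rhom_sig2])
  assume "Q \<noteq> 0" then show "sig Q \<noteq> 0"
    unfolding sig_def by (subst map_poly_eq_0_iff) (simp_all add: a)
qed

lemma rhom_tau: "rhom (fmap sig)"
  by (rule rhom_fmap[OF rhom_sig sig_inj])

definition PX1 :: "int poly poly poly poly" where "PX1 = [:[:[:[:0,1:]:]:]:]"
definition PX2 :: "int poly poly poly poly" where "PX2 = [:[:[:0,1:]:]:]"
definition PX3 :: "int poly poly poly poly" where "PX3 = [:[:0,1:]:]"
definition PX4 :: "int poly poly poly poly" where "PX4 = [:0,1:]"

lemma x_Fract: "x1 = Fract PX1 1" "x2 = Fract PX2 1" "x3 = Fract PX3 1" "x4 = Fract PX4 1"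
  by (simp_all add: x1_def x2_def x3_def x4_def PX1_def PX2_def PX3_def PX4_def)

lemma sig_vals: "sig PX1 = PX1" "sig PX3 = PX3" "sig PX4 = PX4" "sig PX2 = PX2 * PX1 - 1"
  by (simp_all add: sig_def sig2_def PX1_def PX2_def PX3_def PX4_def q0_def map_poly_pCons pcompose_pCons one_pCons)

lemma EE_vals: "EE y PX1 = 0" "EE y PX3 = 0" "EE y PX4 = x1" "EE y PX2 = y"
  by (simp_all add: EE_def e3_def e2_def e1_def PX1_def PX2_def PX3_def PX4_def map_poly_pCons)


lemma ring_id1: "(a + c + (b*a - 1)*c) * (b*a - 1) = (1 + b*c) * (a*(b*a-1::'a::comm_ring_1))"
  by (simp add: algebra_simps)

lemma sig1: "sig 1 = 1" by (simp add: rhomD[OF rhom_sig])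
lemma EE1: "EE y 1 = 1" by (simp add: rhomD[OF rhom_EE])

lemma tau_Fract: "Q \<noteq> 0 \<Longrightarrow> fmap sig (Fract P Q) = Fract (sig P) (sig Q)"
  by (rule fmap_Fract[OF rhom_sig sig_inj])

lemma PX_nz: "PX1 \<noteq> 0" "PX2 \<noteq> 0" "PX3 \<noteq> 0" "PX4 \<noteq> 0"
  by (simp_all add: PX1_def PX2_def PX3_def PX4_def)

lemma z_Fract: "za = Fract (1 + PX2) PX1" "zb = Fract (PX1 + PX3) PX2"
  "zc = Fract (PX1 + PX3 + PX2 * PX3) (PX1 * PX2)"
  by (simp_all add: za_def zb_def zc_def x_Fract F_one PX_nz)

lemma tau_x: "fmap sig x1 = Fract PX1 1" "fmap sig x2 = Fract (PX2 * PX1 - 1) 1"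
  "fmap sig x3 = Fract PX3 1" "fmap sig x4 = Fract PX4 1"
  by (simp_all add: x_Fract tau_Fract sig_vals sig1)

lemma tau_za: "fmap sig za = Fract PX2 1"
  by (simp add: z_Fract tau_Fract PX_nz rhomD[OF rhom_sig] sig_vals sig1 eq_fract)

lemma tau_zb: "fmap sig zb = Fract (PX1 + PX3) (PX2 * PX1 - 1)"
  by (simp add: z_Fract tau_Fract PX_nz rhomD[OF rhom_sig] sig_vals sig1)

lemma EE_den: "EE y (PX2 * PX1 - 1) = -1"
  by (simp add: rhomD[OF rhom_EE] rhom_diff[OF rhom_EE] EE_vals EE1)

lemma den_nz: "PX2 * PX1 - 1 \<noteq> 0"
  using EE_den[of 0] by (metis rhomD(1)[OF rhom_EE] zero_neq_neg_one)

lemma tau_zc: "fmap sig zc = Fract (1 + PX2 * PX3) (PX2 * PX1 - 1)"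
proof -
  have "fmap sig zc = Fract (PX1 + PX3 + (PX2 * PX1 - 1) * PX3) (PX1 * (PX2 * PX1 - 1))"
    by (simp add: z_Fract tau_Fract PX_nz rhomD[OF rhom_sig] sig_vals sig1)
  also have "\<dots> = Fract (1 + PX2 * PX3) (PX2 * PX1 - 1)"
    using PX_nz den_nz by (simp add: eq_fract ring_id1)
  finally show ?thesis .
qed

definition ff :: "rf \<Rightarrow> rf \<Rightarrow> rf" where "ff y r = loc (EE y) (fmap sig r)"

lemma locD1: "EE y Q \<noteq> 0 \<Longrightarrow> Fract P Q \<in> locD (EE y)"
  unfolding locD_def by blast

lemma ff_vals: "ff y x1 = 0" "ff y x2 = -1" "ff y x3 = 0" "ff y x4 = x1"
  "ff y za = y" "ff y zb = 0" "ff y zc = -1"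
  by (simp_all add: ff_def tau_x tau_za tau_zb tau_zc loc_Fract[OF rhom_EE] EE1 EE_den
       EE_vals rhomD[OF rhom_EE] rhom_diff[OF rhom_EE])

lemma tau_gens: "g \<in> {x1, x2, x3, x4, za, zb, zc} \<Longrightarrow> fmap sig g \<in> locD (EE y)"
  by (auto simp: tau_x tau_za tau_zb tau_zc EE1 EE_den intro!: locD1)



lemma rhom_Fract1: "rhom (\<lambda>a::'a::idom. Fract a 1)"
  unfolding rhom_def by (simp add: Zero_fract_def One_fract_def)

lemma Fract_of_int: "(of_int n :: 'a::idom fract) = Fract (of_int n) 1"
  using rhom_of_int'[OF rhom_Fract1, of n] by (rule sym)

lemma zalg_hom_into:
  assumes hom: "\<forall>a\<in>zalg G. \<forall>b\<in>zalg G. f (a + b) = f a + f b \<and> f (a * b) = f a * f b"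
    and ints: "\<And>n. f (of_int n) = of_int n"
    and gens: "\<And>g. g \<in> G \<Longrightarrow> f g \<in> zalg H"
    and r: "r \<in> zalg G"
  shows "f r \<in> zalg H"
  using r
proof (induction rule: zalg.induct)
  case (zalg_int n) then show ?case by (simp add: ints zalg.zalg_int)
next
  case (zalg_gen g) then show ?case by (rule gens)
next
  case (zalg_add a b) then show ?case using hom by (simp add: zalg.zalg_add)
next
  case (zalg_mult a b) then show ?case using hom by (simp add: zalg.zalg_mult)
qed

lemma hom_of_int:
  assumes "ring_hom_on (zalg G) B f"
  shows "f (of_int n) = of_int n"
proof -
  have h: "f 1 = 1" "\<And>a b. a \<in> zalg G \<Longrightarrow> b \<in> zalg G \<Longrightarrow> f (a + b) = f a + f b"
    using assms unfolding ring_hom_on_def by auto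
  have I: "of_int m \<in> zalg G" for m by (rule zalg.zalg_int)
  have z: "f 0 = 0" using h(2)[OF I[of 0] I[of 0]] by simp
  have nn: "f (of_nat m) = of_nat m" for m
  proof (induction m)
    case 0 then show ?case by (simp add: z)
  next
    case (Suc m)
    have "f (of_nat (Suc m)) = f (of_int (int m) + of_int 1)" by (simp add: add.commute)
    also have "\<dots> = f (of_nat m) + f 1" using h(2)[OF I[of "int m"] I[of 1]] by simp
    finally show ?case using Suc h(1) by simp
  qed
  show ?thesis
  proof (cases "n \<ge> 0")
    case True then have "n = int (nat n)" by simp
    then show ?thesis by (metis nn of_int_of_nat_eq)
  next
    case False
    define m where "m = nat (-n)"
    have n: "n = - int m" using False m_def by simp
    have "f (of_int (int m) + of_int (- int m)) = 0" using z by simp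
    then have "f (of_int (int m)) + f (of_int (- int m)) = 0" using h(2)[OF I[of "int m"] I[of "- int m"]] by simp
    then have "f (of_int (- int m)) = - of_nat m" using nn
      by (metis add.commute add_eq_0_iff of_int_of_nat_eq)
    then show ?thesis using n by simp
  qed
qed

abbreviation GG :: "rf set" where "GG \<equiv> {x1, x2, x3, x4, za, zb, zc}"

lemma A_eq: "cluster_alg Sigma = zalg GG"
  unfolding cluster_alg_def cv ..

lemma tauA: "r \<in> zalg GG \<Longrightarrow> fmap sig r \<in> locD (EE y)"
proof (induction rule: zalg.induct)
  case (zalg_int n)
  then show ?case using rhom_of_int'[OF rhom_tau, of n] Fract_of_int[of n]
    by (metis EE1 locD1 zero_neq_one)
next
  case (zalg_gen g) then show ?case by (rule tau_gens)
next
  case (zalg_add a b) then show ?case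
    by (simp add: rhomD[OF rhom_tau] locD_add[OF rhom_EE])
next
  case (zalg_mult a b) then show ?case
    by (simp add: rhomD[OF rhom_tau] locD_mult[OF rhom_EE])
qed

lemma ff_add: "a \<in> zalg GG \<Longrightarrow> b \<in> zalg GG \<Longrightarrow> ff y (a + b) = ff y a + ff y b"
  unfolding ff_def by (simp add: rhomD[OF rhom_tau] locD_add[OF rhom_EE] tauA)

lemma ff_mult: "a \<in> zalg GG \<Longrightarrow> b \<in> zalg GG \<Longrightarrow> ff y (a * b) = ff y a * ff y b"
  unfolding ff_def by (simp add: rhomD[OF rhom_tau] locD_mult[OF rhom_EE] tauA)

lemma ff_one: "ff y 1 = 1"
  unfolding ff_def using loc_Fract[OF rhom_EE[of y], where Q=1 and P=1]
  by (simp add: rhomD[OF rhom_tau] EE1 One_fract_def[symmetric])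

lemma ff_of_int: "ff y (of_int n) = of_int n"
  unfolding ff_def using loc_Fract[OF rhom_EE[of y], where Q=1 and P="of_int n"]
  by (simp add: rhom_of_int'[OF rhom_tau] rhom_of_int'[OF rhom_EE] EE1 Fract_of_int[symmetric])

lemma ff_ring_hom: assumes y: "y \<in> zalg GG" shows "ring_hom_on (zalg GG) (zalg GG) (ff y)"
proof -
  have "ff y r \<in> zalg GG" if "r \<in> zalg GG" for r
  proof (rule zalg_hom_into[OF _ ff_of_int _ that])
    show "\<forall>a\<in>zalg GG. \<forall>b\<in>zalg GG. ff y (a + b) = ff y a + ff y b \<and> ff y (a * b) = ff y a * ff y b"
      by (simp add: ff_add ff_mult)
    fix g assume "g \<in> GG"
    then show "ff y g \<in> zalg GG"
      using y zalg.zalg_gen[of x1 GG] zalg.zalg_int[of 0 GG] zalg.zalg_int[of "-1" GG]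
      by (auto simp: ff_vals)
  qed
  then show ?thesis unfolding ring_hom_on_def by (auto simp: ff_one ff_add ff_mult)
qed



lemma vseq_len: "length (vseq S ks) = length ks"
  by (simp add: vseq_def)

lemma vseq_hd: "vseq S (k # t) ! 0 = svar S k"
  by (simp add: vseq_def del: upt_Suc)

lemma Sigma_simps: "sex Sigma = {1,2}" "sfx Sigma = {3,4}" "slab Sigma = {1,2,3,4}"
  "svar Sigma = (\<lambda>i. if i = 1 then x1 else if i = 2 then x2 else if i = 3 then x3
                 else if i = 4 then x4 else 0)"
  by (simp_all add: Sigma_mk mk_simps slab_mk)

lemma rooted:
  assumes h: "ring_hom_on (cluster_alg Sigma) (cluster_alg Sigma) f"
    and v: "f x1 = 0" "f x2 = -1" "f x3 = 0" "f x4 = x1"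
  shows "rooted_cluster_morphism Sigma Sigma f"
proof -
  have cm1: "\<forall>j\<in>sex Sigma. f (svar Sigma j) \<in> svar Sigma ` sex Sigma \<union> \<int>"
    using v by (auto simp: Sigma_simps)
  have cm2: "\<forall>j\<in>sfx Sigma. f (svar Sigma j) \<in> svar Sigma ` slab Sigma \<union> \<int>"
    using v by (auto simp: Sigma_simps)
  have cm3: "ks = [] \<and> ks' = []"
    if a: "admissible Sigma ks" "admissible Sigma ks'" and m: "map f (vseq Sigma ks) = vseq Sigma ks'"
    for ks ks'
  proof (cases ks)
    case Nil
    then show ?thesis using arg_cong[OF m, of length] by (simp add: vseq_len)
  next
    case (Cons k t)
    from arg_cong[OF m, of length] Cons obtain k' t' where ks': "ks' = k' # t'"
      by (cases ks') (auto simp: vseq_len)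
    have kk: "k \<in> {1,2}" "k' \<in> {1,2}" using a Cons ks' by (auto simp: admissible_def Sigma_simps)
    have "map f (vseq Sigma ks) ! 0 = vseq Sigma ks' ! 0" using m by simp
    then have "f (svar Sigma k) = svar Sigma k'"
      using Cons ks' by (simp add: vseq_hd nth_map vseq_len)
    then have False using kk v nz nz2 by (auto simp: Sigma_simps)
    then show ?thesis ..
  qed
  show ?thesis
    unfolding rooted_cluster_morphism_def
  proof (intro conjI h cm1 cm2 allI impI)
    fix ks ks' assume "admissible Sigma ks \<and> admissible Sigma ks' \<and> map f (vseq Sigma ks) = vseq Sigma ks'"
    then have "ks = [] \<and> ks' = []" using cm3 by blast
    then show "\<forall>j\<in>slab Sigma.
            (f (svar Sigma j) \<in> \<int> \<longrightarrow> f (svar (mut_seq Sigma ks) j) = f (svar Sigma j))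
          \<and> (\<forall>j'\<in>slab Sigma. svar Sigma j' = f (svar Sigma j) \<longrightarrow>
                f (svar (mut_seq Sigma ks) j) = svar (mut_seq Sigma ks') j')" by simp
  qed
qed



lemma x1_only: "r \<in> zalg {x1} \<Longrightarrow> \<exists>p. r = Fract [:[:[:p:]:]:] 1"
proof (induction rule: zalg.induct)
  case (zalg_int n)
  then show ?case by (rule exI[of _ "of_int n"]) (simp add: Fract_of_int of_int_poly)
next
  case (zalg_gen g) then show ?case by (auto simp: x1_def)
next
  case (zalg_add a b) then show ?case by auto
next
  case (zalg_mult a b) then show ?case by auto
qed

lemma x2_notin: "x2 \<notin> zalg {x1}"
proof
  assume "x2 \<in> zalg {x1}"
  then obtain p where "x2 = Fract [:[:[:p:]:]:] 1" using x1_only by blast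
  then show False by (simp add: x2_def F_eq del: eq_fract)
qed

lemma part4:
  assumes h: "ring_hom_on (cluster_alg Sigma) (cluster_alg Sigma) f"
    and v: "f x1 = 0" "f x2 = -1" "f x3 = 0" "f x4 = x1" "f za = x2" "f zb = 0" "f zc = -1"
  shows "f ` cluster_alg Sigma = zalg {x1, x2}"
    "cluster_alg (image_seed f Sigma Sigma) = zalg {x1}"
    "\<not> ideal_morphism f Sigma Sigma"
proof -
  have h': "ring_hom_on (zalg GG) (zalg GG) f" using h A_eq by simp
  have hom: "\<forall>a\<in>zalg GG. \<forall>b\<in>zalg GG. f (a + b) = f a + f b \<and> f (a * b) = f a * f b"
    using h' unfolding ring_hom_on_def by blast
  have ints: "f (of_int n) = of_int n" for n by (rule hom_of_int[OF h'])
  have sub: "f r \<in> zalg {x1, x2}" if "r \<in> zalg GG" for r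
  proof (rule zalg_hom_into[OF hom ints _ that])
    fix g assume "g \<in> GG"
    then show "f g \<in> zalg {x1, x2}"
      using zalg.zalg_gen[of x1 "{x1,x2}"] zalg.zalg_gen[of x2 "{x1,x2}"]
        zalg.zalg_int[of 0 "{x1,x2}"] zalg.zalg_int[of "-1" "{x1,x2}"]
      by (auto simp: v)
  qed
  have sup: "r \<in> f ` zalg GG" if "r \<in> zalg {x1, x2}" for r
    using that
  proof (induction rule: zalg.induct)
    case (zalg_int n)
    then show ?case using ints[of n] zalg.zalg_int[of n GG] by (metis image_eqI)
  next
    case (zalg_gen g)
    have "x1 \<in> f ` zalg GG" using v(4) zalg.zalg_gen[of x4 GG] by (metis image_eqI insertCI)
    moreover have "x2 \<in> f ` zalg GG" using v(5) zalg.zalg_gen[of za GG] by (metis image_eqI insertCI)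
    ultimately show ?case using zalg_gen by auto
  next
    case (zalg_add a b)
    then obtain a' b' where "a' \<in> zalg GG" "b' \<in> zalg GG" "a = f a'" "b = f b'" by blast
    then show ?case using hom zalg.zalg_add[of a' GG b'] by (metis image_eqI)
  next
    case (zalg_mult a b)
    then obtain a' b' where "a' \<in> zalg GG" "b' \<in> zalg GG" "a = f a'" "b = f b'" by blast
    then show ?case using hom zalg.zalg_mult[of a' GG b'] by (metis image_eqI)
  qed
  show img: "f ` cluster_alg Sigma = zalg {x1, x2}"
    unfolding A_eq using sub sup by blast
  have i1: "f ` svar Sigma ` sex Sigma = {0, -1}" using v by (auto simp: Sigma_simps)
  have i2: "f ` svar Sigma ` slab Sigma = {0, -1, x1}" using v by (auto simp: Sigma_simps)
  have ex: "{j \<in> sex Sigma. svar Sigma j \<in> f ` svar Sigma ` sex Sigma} = {}"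
    unfolding i1 using nz nz2 by (auto simp: Sigma_simps)
  have fx: "{j \<in> slab Sigma. svar Sigma j \<in> f ` svar Sigma ` slab Sigma} = {1}"
    unfolding i2 using nz nz2 by (auto simp: Sigma_simps)
  have IS: "image_seed f Sigma Sigma = Sigma\<lparr>sex := {}, sfx := {1}\<rparr>"
    unfolding image_seed_def ex fx by simp
  have "cluster_vars (Sigma\<lparr>sex := {}, sfx := {1}\<rparr>) = {x1}"
    unfolding cluster_vars_def admissible_def slab_def by (auto simp: Sigma_simps)
  then show cv1: "cluster_alg (image_seed f Sigma Sigma) = zalg {x1}"
    unfolding IS cluster_alg_def by simp
  show "\<not> ideal_morphism f Sigma Sigma"
    unfolding ideal_morphism_def cv1 img
    using x2_notin zalg.zalg_gen[of x2 "{x1,x2}"] by blast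
qed

theorem mainTheorem2:
  shows "cluster_alg Sigma =
           zalg {x1, x2, x3, x4, (1 + x2) / x1, (x1 + x3) / x2, (x1 + x3 + x2 * x3) / (x1 * x2)}
   \<and> (\<forall>y\<in>cluster_alg Sigma. \<exists>f.
         ring_hom_on (cluster_alg Sigma) (cluster_alg Sigma) f
       \<and> f x1 = 0 \<and> f x2 = -1 \<and> f x3 = 0 \<and> f x4 = x1
       \<and> f ((1 + x2) / x1) = y \<and> f ((x1 + x3) / x2) = 0
       \<and> f ((x1 + x3 + x2 * x3) / (x1 * x2)) = -1
       \<and> rooted_cluster_morphism Sigma Sigma f)
   \<and> (\<exists>f g. rooted_cluster_morphism Sigma Sigma f \<and> rooted_cluster_morphism Sigma Sigma g
       \<and> (\<forall>j\<in>slab Sigma. f (svar Sigma j) = g (svar Sigma j))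
       \<and> (\<exists>a\<in>cluster_alg Sigma. f a \<noteq> g a))
   \<and> (\<forall>f. ring_hom_on (cluster_alg Sigma) (cluster_alg Sigma) f
       \<and> f x1 = 0 \<and> f x2 = -1 \<and> f x3 = 0 \<and> f x4 = x1
       \<and> f ((1 + x2) / x1) = x2 \<and> f ((x1 + x3) / x2) = 0
       \<and> f ((x1 + x3 + x2 * x3) / (x1 * x2)) = -1
       \<longrightarrow> rooted_cluster_morphism Sigma Sigma f
         \<and> f ` cluster_alg Sigma = zalg {x1, x2}
         \<and> cluster_alg (image_seed f Sigma Sigma) = zalg {x1}
         \<and> \<not> ideal_morphism f Sigma Sigma)"
  unfolding za_def[symmetric] zb_def[symmetric] zc_def[symmetric]
proof (intro conjI allI impI ballI)
  show "cluster_alg Sigma = zalg GG" by (rule A_eq)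
next
  fix y assume y: "y \<in> cluster_alg Sigma"
  show "\<exists>f. ring_hom_on (cluster_alg Sigma) (cluster_alg Sigma) f \<and>
             f x1 = 0 \<and> f x2 = - 1 \<and> f x3 = 0 \<and> f x4 = x1 \<and> f za = y \<and> f zb = 0 \<and> f zc = - 1 \<and>
             rooted_cluster_morphism Sigma Sigma f"
  proof (intro exI conjI)
    show hh: "ring_hom_on (cluster_alg Sigma) (cluster_alg Sigma) (ff y)"
      using ff_ring_hom y A_eq by simp
    then show "rooted_cluster_morphism Sigma Sigma (ff y)" by (rule rooted) (simp_all add: ff_vals)
  qed (simp_all add: ff_vals)
next
  have h0: "ring_hom_on (cluster_alg Sigma) (cluster_alg Sigma) (ff 0)"
    using ff_ring_hom[of 0] zalg.zalg_int[of 0 GG] A_eq by simp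
  have h1: "ring_hom_on (cluster_alg Sigma) (cluster_alg Sigma) (ff 1)"
    using ff_ring_hom[of 1] zalg.zalg_int[of 1 GG] A_eq by simp
  show "\<exists>f g. rooted_cluster_morphism Sigma Sigma f \<and> rooted_cluster_morphism Sigma Sigma g \<and>
      (\<forall>j\<in>slab Sigma. f (svar Sigma j) = g (svar Sigma j)) \<and> (\<exists>a\<in>cluster_alg Sigma. f a \<noteq> g a)"
  proof (intro exI conjI)
    show "rooted_cluster_morphism Sigma Sigma (ff 0)" using h0 by (rule rooted) (simp_all add: ff_vals)
    show "rooted_cluster_morphism Sigma Sigma (ff 1)" using h1 by (rule rooted) (simp_all add: ff_vals)
    show "\<forall>j\<in>slab Sigma. ff 0 (svar Sigma j) = ff 1 (svar Sigma j)"
      by (auto simp: Sigma_simps ff_vals)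
    show "\<exists>a\<in>cluster_alg Sigma. ff 0 a \<noteq> ff 1 a"
      using zalg.zalg_gen[of za GG] A_eq by (intro bexI[of _ za]) (simp_all add: ff_vals)
  qed
next
  fix f assume H: "ring_hom_on (cluster_alg Sigma) (cluster_alg Sigma) f \<and>
       f x1 = 0 \<and> f x2 = - 1 \<and> f x3 = 0 \<and> f x4 = x1 \<and> f za = x2 \<and> f zb = 0 \<and> f zc = - 1"
  then show "rooted_cluster_morphism Sigma Sigma f" using rooted by blast
  show "f ` cluster_alg Sigma = zalg {x1, x2}" using part4 H by blast
  show "cluster_alg (image_seed f Sigma Sigma) = zalg {x1}" using part4 H by blast
  show "\<not> ideal_morphism f Sigma Sigma" using part4 H by blast
qed


end
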